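(* Let $K\subseteq K'\subseteq\mathbb{R}^n$ be convex sets. Suppose the inequality $\alpha^\mathsf{T} x\le\beta$ is valid for $K$, is not valid for $K'$, and is exposed at infinity by a sequence $(x_k)_k\subseteq\mathbb{R}^n$ with respect to $K$. Then there exists $k$ with $x_k\in\operatorname{int}(K')$.
   Context: An inequality $\alpha^\mathsf{T} x\le\beta$ (written $(\alpha,\beta)$) is valid for a set $C$ if it holds on $C$; it is non-trivial if $\alpha\neq0$. A point $x_0$ exposes a valid inequality $(\alpha,\beta)$ with respect to a convex set $C$ if $\alpha^\mathsf{T} x_0=\beta$ and for every non-trivial valid inequality $\gamma^\mathsf{T} x\le\delta$ for $C$ with $\gamma^\mathsf{T} x_0=\delta$ there is $\mu>0$ with $\gamma=\mu\alpha$ and $\delta=\mu\beta$. For a convex set $C$ with recession cone $\operatorname{rec}(C)$ and a valid inequality $\alpha^\mathsf{T} x\le\beta$, a sequence $(x_k)_k$ exposes $(\alpha,\beta)$ at infinity with respect to $C$ if: $\|x_k\|\to\infty$; $x_k/\|x_k\|\to d\in\operatorname{rec}(C)$; $d$ exposes $\alpha^\mathsf{T} x\le0$ with respect to $\operatorname{rec}(C)$; and there exists $y$ with $\alpha^\mathsf{T} y=\beta$ such that $\operatorname{dist}(x_k,y+\langle d\rangle)\to0$, where $\langle d\rangle$ is the line spanned by $d$. *)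

theory Defs
  imports "HOL-Analysis.Analysis"
begin

definition valid_ineq :: "'a::euclidean_space set \<Rightarrow> 'a \<Rightarrow> real \<Rightarrow> bool" where
  "valid_ineq C \<alpha> \<beta> \<longleftrightarrow> (\<forall>x\<in>C. \<alpha> \<bullet> x \<le> \<beta>)"

definition rec_cone :: "'a::euclidean_space set \<Rightarrow> 'a set" where
  "rec_cone C = {d. \<forall>x\<in>C. \<forall>t::real. t \<ge> 0 \<longrightarrow> x + t *\<^sub>R d \<in> C}"

definition exposes :: "'a::euclidean_space \<Rightarrow> 'a set \<Rightarrow> 'a \<Rightarrow> real \<Rightarrow> bool" where
  "exposes x0 C \<alpha> \<beta> \<longleftrightarrow> valid_ineq C \<alpha> \<beta> \<and> \<alpha> \<bullet> x0 = \<beta> \<and>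
     (\<forall>\<gamma> \<delta>. \<gamma> \<noteq> 0 \<and> valid_ineq C \<gamma> \<delta> \<and> \<gamma> \<bullet> x0 = \<delta> \<longrightarrow>
        (\<exists>\<mu>>0. \<gamma> = \<mu> *\<^sub>R \<alpha> \<and> \<delta> = \<mu> * \<beta>))"

definition exposes_at_infinity :: "(nat \<Rightarrow> 'a::euclidean_space) \<Rightarrow> 'a set \<Rightarrow> 'a \<Rightarrow> real \<Rightarrow> bool" where
  "exposes_at_infinity x C \<alpha> \<beta> \<longleftrightarrow>
     filterlim (\<lambda>k. norm (x k)) at_top sequentially \<and>
     (\<exists>d. ((\<lambda>k. x k /\<^sub>R norm (x k)) \<longlonglongrightarrow> d) \<and> d \<in> rec_cone C \<and>
          exposes d (rec_cone C) \<alpha> 0 \<and>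
          (\<exists>y. \<alpha> \<bullet> y = \<beta> \<and>
               ((\<lambda>k. infdist (x k) ((\<lambda>t. y + t *\<^sub>R d) ` UNIV)) \<longlonglongrightarrow> 0)))"

end

theory Submission
  imports Defs
begin

lemma support_noninterior:
  fixes S :: "'a::euclidean_space set"
  assumes "convex S" "x \<notin> interior S"
  shows "\<exists>a. norm a = 1 \<and> (\<forall>w\<in>S. a \<bullet> w \<le> a \<bullet> x)"
proof -
  have "\<exists>a. a \<noteq> 0 \<and> (\<forall>w\<in>S. a \<bullet> w \<le> a \<bullet> x)"
  proof (cases "interior S = {}")
    case True
    then obtain a b where a: "a \<noteq> 0" "S \<subseteq> {x. a \<bullet> x = b}"
      using empty_interior_subset_hyperplane[OF assms(1)] by metis
    show ?thesis
    proof (cases "a \<bullet> x \<ge> b")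
      case True then show ?thesis using a by (intro exI[of _ a]) auto
    next
      case False then show ?thesis using a by (intro exI[of _ "-a"]) auto
    qed
  next
    case False
    have "{x} \<inter> interior S = {}" using assms by auto
    then obtain a b where ab: "a \<noteq> 0" "\<forall>y\<in>{x}. a \<bullet> y \<le> b" "\<forall>y\<in>interior S. a \<bullet> y \<ge> b"
      using separating_hyperplane_sets[of "{x}" "interior S"] False convex_interior[OF assms(1)]
      by auto
    have "interior S \<subseteq> {y. (-a) \<bullet> y \<le> (-a) \<bullet> x}" using ab by auto
    moreover have "closed {y. (-a) \<bullet> y \<le> (-a) \<bullet> x}"
      using closed_halfspace_le[of "-a" "(-a) \<bullet> x"] by simp
    ultimately have "closure (interior S) \<subseteq> {y. (-a) \<bullet> y \<le> (-a) \<bullet> x}"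
      by (rule closure_minimal)
    then have "S \<subseteq> {y. (-a) \<bullet> y \<le> (-a) \<bullet> x}"
      using convex_closure_interior[OF assms(1) False] closure_subset by blast
    then show ?thesis using ab(1) by (intro exI[of _ "-a"]) auto
  qed
  then obtain a where a: "a \<noteq> 0" "\<forall>w\<in>S. a \<bullet> w \<le> a \<bullet> x" by blast
  show ?thesis
    using a by (intro exI[of _ "a /\<^sub>R norm a"]) (auto simp: divide_right_mono)
qed

lemma arith_aux:
  fixes n dx dpx dy ds ny t :: real
  assumes "n / 2 \<le> dx" "\<bar>dpx\<bar> \<le> ds" "\<bar>dy\<bar> \<le> ny" "ds < 1" "t = dx + dpx - dy"
    "2 * (1 + ny) + 2 < n"
  shows "0 \<le> t"
  using assms by (auto simp: abs_le_iff)

lemma ray_bound: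
  fixes a b c :: real
  assumes "\<And>s. s \<ge> 0 \<Longrightarrow> a + s * c \<le> b"
  shows "c \<le> 0"
proof (rule ccontr)
  assume "\<not> c \<le> 0"
  then have c: "c > 0" by simp
  have "a + ((\<bar>b - a\<bar> + 1) / c) * c \<le> b" by (rule assms) (use c in simp)
  then have "a + (\<bar>b - a\<bar> + 1) \<le> b" using c by simp
  then show False by arith
qed

theorem theorem4:
  fixes K K' :: "'a::euclidean_space set" and \<alpha> :: 'a and \<beta> :: real
    and x :: "nat \<Rightarrow> 'a"
  assumes "convex K" and "convex K'" and "K \<subseteq> K'"
    and "valid_ineq K \<alpha> \<beta>"
    and "\<not> valid_ineq K' \<alpha> \<beta>"
    and "exposes_at_infinity x K \<alpha> \<beta>"
  shows "\<exists>k. x k \<in> interior K'"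
proof (rule ccontr)
  assume "\<not> (\<exists>k. x k \<in> interior K')"
  then have "\<forall>k. \<exists>a. norm a = 1 \<and> (\<forall>w\<in>K'. a \<bullet> w \<le> a \<bullet> x k)"
    using support_noninterior[OF assms(2)] by blast
  then obtain g where g1: "\<And>k. norm (g k) = 1" and g2: "\<And>k w. w \<in> K' \<Longrightarrow> g k \<bullet> w \<le> g k \<bullet> x k"
    by metis
  from assms(6) obtain d y where
    nx: "filterlim (\<lambda>k. norm (x k)) at_top sequentially" and
    conv: "(\<lambda>k. x k /\<^sub>R norm (x k)) \<longlonglongrightarrow> d" and dK: "d \<in> rec_cone K" and
    ex: "exposes d (rec_cone K) \<alpha> 0" and ay: "\<alpha> \<bullet> y = \<beta>" and
    inf: "(\<lambda>k. infdist (x k) ((\<lambda>t. y + t *\<^sub>R d) ` UNIV)) \<longlonglongrightarrow> 0"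
    unfolding exposes_at_infinity_def by blast
  obtain z where z: "z \<in> K'" "\<alpha> \<bullet> z > \<beta>"
    using assms(5) unfolding valid_ineq_def by force
  have "K \<noteq> {}"
  proof
    assume "K = {}"
    then have "rec_cone K = UNIV" unfolding rec_cone_def by auto
    then have "\<alpha> \<bullet> \<alpha> \<le> 0" using ex unfolding exposes_def valid_ineq_def by auto
    then have "\<alpha> = 0" using inner_ge_zero[of \<alpha>] by (simp add: order_antisym)
    then show False using ay z by simp
  qed
  then obtain w0 where w0: "w0 \<in> K" by blast
  have gd: "g k \<bullet> d \<le> 0" for k
  proof (rule ray_bound)
    fix s :: real assume "s \<ge> 0"
    then have "w0 + s *\<^sub>R d \<in> K'" using dK w0 assms(3) unfolding rec_cone_def by blast
    then have "g k \<bullet> (w0 + s *\<^sub>R d) \<le> g k \<bullet> x k" by (rule g2)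
    then show "g k \<bullet> w0 + s * (g k \<bullet> d) \<le> g k \<bullet> x k" by (simp add: inner_add_right)
  qed
  have "seq_compact (sphere (0::'a) 1)" by (rule compact_imp_seq_compact) simp
  then obtain \<gamma> r where \<gamma>: "\<gamma> \<in> sphere 0 1" and r: "strict_mono r" and gl: "(g \<circ> r) \<longlonglongrightarrow> \<gamma>"
    using g1 by (elim seq_compactE) auto
  have ng: "norm \<gamma> = 1" using \<gamma> by simp
  obtain N1 where N1: "\<And>k. k \<ge> N1 \<Longrightarrow> norm (x k) > 1"
    using nx unfolding filterlim_at_top_dense eventually_sequentially by blast
  have rN: "k \<ge> N \<Longrightarrow> r k \<ge> N" for k N using seq_suble[OF r, of k] by simp
  define X where "X = (\<lambda>k. x k /\<^sub>R norm (x k))"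
  have Xr: "(X \<circ> r) \<longlonglongrightarrow> d" using LIMSEQ_subseq_LIMSEQ[OF conv r] unfolding X_def .
  have invr: "((\<lambda>k. inverse (norm (x k))) \<circ> r) \<longlonglongrightarrow> 0"
    using LIMSEQ_subseq_LIMSEQ[OF tendsto_inverse_0_at_top[OF nx] r] .
  have gl': "(\<lambda>k. g (r k)) \<longlonglongrightarrow> \<gamma>" using gl by (simp add: o_def)
  have nd: "norm d = 1"
  proof -
    have "(\<lambda>k. norm (X k)) \<longlonglongrightarrow> norm d" using conv unfolding X_def by (rule tendsto_norm)
    moreover have "\<forall>k\<ge>N1. norm (X k) = 1" unfolding X_def
    proof (intro allI impI)
      fix k assume "k \<ge> N1"
      then have "norm (x k) \<noteq> 0" using N1[of k] by fastforce
      then show "norm (x k /\<^sub>R norm (x k)) = 1" by simp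
    qed
    then have "eventually (\<lambda>k. norm (X k) = 1) sequentially" unfolding eventually_sequentially by blast
    ultimately have "(\<lambda>k. 1::real) \<longlonglongrightarrow> norm d"
      by (rule Lim_transform_eventually)
    then show ?thesis using LIMSEQ_unique tendsto_const by blast
  qed
  have A: "\<gamma> \<bullet> e \<le> \<gamma> \<bullet> d" if e: "e \<in> rec_cone K" for e
  proof -
    have L: "(\<lambda>k. (g (r k) \<bullet> w0) * inverse (norm (x (r k))) + g (r k) \<bullet> e) \<longlonglongrightarrow> (\<gamma> \<bullet> w0) * 0 + \<gamma> \<bullet> e"
      using invr gl' by (intro tendsto_intros) (auto simp: o_def)
    have R: "(\<lambda>k. g (r k) \<bullet> X (r k)) \<longlonglongrightarrow> \<gamma> \<bullet> d"
      using Xr gl' by (intro tendsto_intros) (auto simp: o_def)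
    have "\<forall>k\<ge>N1. (g (r k) \<bullet> w0) * inverse (norm (x (r k))) + g (r k) \<bullet> e \<le> g (r k) \<bullet> X (r k)"
    proof (intro allI impI)
      fix k assume "k \<ge> N1"
      then have n: "norm (x (r k)) > 1" using N1 rN by blast
      have "w0 + norm (x (r k)) *\<^sub>R e \<in> K'" using e w0 assms(3) unfolding rec_cone_def by auto
      then have "g (r k) \<bullet> (w0 + norm (x (r k)) *\<^sub>R e) \<le> g (r k) \<bullet> x (r k)" by (rule g2)
      then have "g (r k) \<bullet> w0 + norm (x (r k)) * (g (r k) \<bullet> e) \<le> g (r k) \<bullet> x (r k)"
        by (simp add: inner_add_right)
      then have "(g (r k) \<bullet> w0 + norm (x (r k)) * (g (r k) \<bullet> e)) / norm (x (r k)) \<le> g (r k) \<bullet> x (r k) / norm (x (r k))"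
        using n by (intro divide_right_mono) auto
      moreover have "(g (r k) \<bullet> w0 + norm (x (r k)) * (g (r k) \<bullet> e)) / norm (x (r k))
          = (g (r k) \<bullet> w0) * inverse (norm (x (r k))) + g (r k) \<bullet> e"
      proof -
        have "norm (x (r k)) \<noteq> 0" using n by linarith
        then show ?thesis by (simp add: divide_inverse distrib_right)
      qed
      moreover have "g (r k) \<bullet> X (r k) = g (r k) \<bullet> x (r k) / norm (x (r k))"
        unfolding X_def by (simp add: divide_inverse mult.commute)
      ultimately show "(g (r k) \<bullet> w0) * inverse (norm (x (r k))) + g (r k) \<bullet> e \<le> g (r k) \<bullet> X (r k)"
        by simp
    qed
    then have "(\<gamma> \<bullet> w0) * 0 + \<gamma> \<bullet> e \<le> \<gamma> \<bullet> d" using LIMSEQ_le[OF L R] by blast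
    then show ?thesis by simp
  qed
  have zr: "0 \<in> rec_cone K" unfolding rec_cone_def by simp
  have B: "\<gamma> \<bullet> d \<le> 0"
  proof -
    have "(\<lambda>k. g (r k) \<bullet> d) \<longlonglongrightarrow> \<gamma> \<bullet> d" using gl' by (intro tendsto_intros)
    then show ?thesis using gd by (intro LIMSEQ_le_const2) auto
  qed
  have gd0: "\<gamma> \<bullet> d = 0" using A[OF zr] B by simp
  have "valid_ineq (rec_cone K) \<gamma> 0" using A gd0 unfolding valid_ineq_def by auto
  moreover have "\<gamma> \<noteq> 0" using ng by auto
  ultimately obtain \<mu> where mu: "\<mu> > 0" "\<gamma> = \<mu> *\<^sub>R \<alpha>"
    using ex gd0 unfolding exposes_def by blast
  define L where "L = (\<lambda>t. y + t *\<^sub>R d) ` UNIV"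
  define \<rho> where "\<rho> = (\<lambda>k. infdist (x k) L + 1 / (real k + 1))"
  have "\<exists>t. dist (x k) (y + t *\<^sub>R d) < \<rho> k" for k
  proof -
    have "L \<noteq> {}" unfolding L_def by simp
    moreover have "infdist (x k) L < \<rho> k" unfolding \<rho>_def by simp
    ultimately have "(INF a\<in>L. dist (x k) a) < \<rho> k" by (simp add: infdist_notempty)
    then obtain a where "a \<in> L" "dist (x k) a < \<rho> k"
      using \<open>L \<noteq> {}\<close> by (subst (asm) cINF_less_iff) (auto intro: bdd_belowI[of _ 0])
    then show ?thesis unfolding L_def by auto
  qed
  then obtain t where t: "\<And>k. dist (x k) (y + t k *\<^sub>R d) < \<rho> k" by metis
  have rho0: "\<rho> \<longlonglongrightarrow> 0"
  proof -
    have i: "(\<lambda>k. 1 / (real k + 1)) \<longlonglongrightarrow> 0"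
      using LIMSEQ_inverse_real_of_nat by (simp add: inverse_eq_divide add.commute)
    have "(\<lambda>k. infdist (x k) L + 1 / (real k + 1)) \<longlonglongrightarrow> 0 + 0"
      using inf i unfolding L_def by (intro tendsto_add)
    then show ?thesis unfolding \<rho>_def by simp
  qed
  obtain N2 where N2: "\<And>k. k \<ge> N2 \<Longrightarrow> norm (x k) > 2 * (1 + norm y) + 2"
    using nx unfolding filterlim_at_top_dense eventually_sequentially by blast
  have "eventually (\<lambda>k. d \<bullet> X k > 1/2) sequentially"
  proof -
    have "(\<lambda>k. d \<bullet> X k) \<longlonglongrightarrow> d \<bullet> d" using conv unfolding X_def by (intro tendsto_intros)
    moreover have "d \<bullet> d = 1" using nd by (simp add: dot_square_norm)
    ultimately show ?thesis by (intro order_tendstoD) auto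
  qed
  then obtain N3 where N3: "\<And>k. k \<ge> N3 \<Longrightarrow> d \<bullet> X k > 1/2" unfolding eventually_sequentially by blast
  have "eventually (\<lambda>k. \<rho> k < 1) sequentially" using rho0 by (intro order_tendstoD) auto
  then obtain N4 where N4: "\<And>k. k \<ge> N4 \<Longrightarrow> \<rho> k < 1" unfolding eventually_sequentially by blast
  define N where "N = max N1 (max N2 (max N3 N4))"
  have C: "g k \<bullet> w \<le> g k \<bullet> y + \<rho> k" if "k \<ge> N" "w \<in> K'" for k w
  proof -
    have k: "k \<ge> N1" "k \<ge> N2" "k \<ge> N3" "k \<ge> N4" using that unfolding N_def by auto
    define p where "p = y + t k *\<^sub>R d"
    have tk: "t k = d \<bullet> (p - y)" using nd unfolding p_def by (simp add: dot_square_norm)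
    have dx: "d \<bullet> x k = norm (x k) * (d \<bullet> X k)" proof -
      have "norm (x k) \<noteq> 0" using N1[OF k(1)] by linarith
      then show ?thesis unfolding X_def by simp
    qed
    have "d \<bullet> x k \<ge> norm (x k) / 2" using dx N3[OF k(3)] N1[OF k(1)]
    proof -
      have "norm (x k) * (1/2) \<le> norm (x k) * (d \<bullet> X k)"
        using N3[OF k(3)] N1[OF k(1)] by (intro mult_left_mono) auto
      then show ?thesis using dx by simp
    qed
    moreover have "\<bar>d \<bullet> (p - x k)\<bar> \<le> dist (x k) p"
      using Cauchy_Schwarz_ineq2[of d "p - x k"] nd by (simp add: dist_norm norm_minus_commute)
    moreover have "\<bar>d \<bullet> y\<bar> \<le> norm y" using Cauchy_Schwarz_ineq2[of d y] nd by simp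
    moreover have "dist (x k) p < 1" using t[of k] N4[OF k(4)] unfolding p_def by simp
    moreover have "d \<bullet> (p - y) = d \<bullet> x k + d \<bullet> (p - x k) - d \<bullet> y" by (simp add: inner_diff_right)
    ultimately have t0: "t k \<ge> 0" using N2[OF k(2)] tk by (intro arith_aux) auto
    have "g k \<bullet> w \<le> g k \<bullet> x k" using g2 that(2) .
    also have "\<dots> = g k \<bullet> y + t k * (g k \<bullet> d) + g k \<bullet> (x k - p)"
      unfolding p_def by (simp add: inner_diff_right inner_add_right)
    also have "\<dots> \<le> g k \<bullet> y + g k \<bullet> (x k - p)" using t0 gd[of k] by (simp add: mult_nonneg_nonpos)
    also have "\<dots> \<le> g k \<bullet> y + \<rho> k"
    proof -
      have "g k \<bullet> (x k - p) \<le> norm (x k - p)" using norm_cauchy_schwarz[of "g k" "x k - p"] g1[of k] by simp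
      also have "\<dots> < \<rho> k" using t[of k] unfolding p_def by (simp add: dist_norm)
      finally show ?thesis by simp
    qed
    finally show ?thesis .
  qed
  have "\<gamma> \<bullet> z \<le> \<gamma> \<bullet> y"
  proof -
    have L: "(\<lambda>k. g (r k) \<bullet> z) \<longlonglongrightarrow> \<gamma> \<bullet> z" using gl' by (intro tendsto_intros)
    have "(\<lambda>k. g (r k) \<bullet> y + \<rho> (r k)) \<longlonglongrightarrow> \<gamma> \<bullet> y + 0"
      using gl' LIMSEQ_subseq_LIMSEQ[OF rho0 r] by (intro tendsto_intros) (auto simp: o_def)
    then have R: "(\<lambda>k. g (r k) \<bullet> y + \<rho> (r k)) \<longlonglongrightarrow> \<gamma> \<bullet> y" by simp
    have "\<forall>k\<ge>N. g (r k) \<bullet> z \<le> g (r k) \<bullet> y + \<rho> (r k)" using C z(1) rN by blast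
    then show ?thesis using LIMSEQ_le[OF L R] by blast
  qed
  then have "\<mu> * (\<alpha> \<bullet> z) \<le> \<mu> * (\<alpha> \<bullet> y)" using mu by simp
  then have "\<alpha> \<bullet> z \<le> \<alpha> \<bullet> y" using mu(1) by simp
  then show False using z ay by simp
qed

end
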